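(* Let $F,G\in\mathcal{S}^*(\mathbb{Z})$. Then, as $N\to\infty$ (with $N\in\mathbb{N}$), uniformly in $z\in\mathbb{T}$, $$\mathfrak{a}^{( * )}(z,F^{\langle N\rangle}+(G^{\langle N\rangle})_{\to3N})=\mathfrak{a}^{( * )}(z,F)\mathfrak{a}^{( * )}(z,G)+z^{3N}\mathfrak{b}^{( * )}(z,F)\mathfrak{b}(z,G)+o(1),$$ $$\mathfrak{b}(z,F^{\langle N\rangle}+(G^{\langle N\rangle})_{\to3N})=z^{3N}\mathfrak{b}(z,G)\mathfrak{a}(z,F)+\mathfrak{b}(z,F)\mathfrak{a}^{( * )}(z,G)+o(1),$$ $$\limsup_{N\to\infty}|\mathfrak{r}(z,F^{\langle N\rangle}+(G^{\langle N\rangle})_{\to3N})-\mathfrak{r}(z,F^{\langle N\rangle})|\leqslant\frac{|\mathfrak{r}(z,G)|}{1-|\mathfrak{r}(z,G)|}.$$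
   Context: $\mathbb{T}$, $\mathbb{D}$ denote the unit circle and open unit disc. $\mathcal{S}^*(\mathbb{Z})$ is the set of sequences $F$ on $\mathbb{Z}$ with $\sup_n|F_n|<1$ and $|F_n|\leqslant C_\ell(1+|n|)^{-\ell}$ for all $n$ and every $\ell\geqslant0$. $F^{\langle N\rangle}_n=F_n\chi_{|n|\leqslant N}$, $(H_{\to M})_n=H_{n-M}$. For a finitely supported $G$ with values in $\mathbb{D}$: $\widetilde X_n(z)=I$ below the support, $\widetilde X_n=(1-|G_n|^2)^{-1/2}\begin{pmatrix}1&\overline{G_n}z^{-n}\\ G_nz^n&1\end{pmatrix}\widetilde X_{n-1}$, and above the support $\widetilde X_n=\begin{pmatrix}\mathfrak{a}(z,G)&\mathfrak{b}^{( * )}(z,G)\\ \mathfrak{b}(z,G)&\mathfrak{a}^{( * )}(z,G)\end{pmatrix}$ with $f^{( * )}(z)=\overline{f(\bar z^{-1})}$. For $F\in\mathcal{S}^*(\mathbb{Z})$, $\mathfrak{a}(z,F)$ and $\mathfrak{b}(z,F)$ are the limits (uniform on $\mathbb{T}$) of $\mathfrak{a}(z,F^{\langle N\rangle})$, $\mathfrak{b}(z,F^{\langle N\rangle})$ as $N\to\infty$. Also $\mathfrak{r}=\mathfrak{b}/\mathfrak{a}^{( * )}$. *)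

theory Defs
  imports "HOL-Analysis.Analysis"
begin

definition Sstar :: "(int \<Rightarrow> complex) set" where
  "Sstar = {F. (\<exists>\<rho><1. \<forall>n. cmod (F n) \<le> \<rho>) \<and>
              (\<forall>l::real\<ge>0. \<exists>C. \<forall>n. cmod (F n) \<le> C * (1 + real_of_int \<bar>n\<bar>) powr (-l))}"

definition trunc :: "int \<Rightarrow> (int \<Rightarrow> complex) \<Rightarrow> int \<Rightarrow> complex" where
  "trunc N F n = (if \<bar>n\<bar> \<le> N then F n else 0)"

definition shift :: "int \<Rightarrow> (int \<Rightarrow> complex) \<Rightarrow> int \<Rightarrow> complex" where
  "shift M H n = H (n - M)"

definition step_mat :: "(int \<Rightarrow> complex) \<Rightarrow> complex \<Rightarrow> int \<Rightarrow> complex^2^2" where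
  "step_mat G z n =
     (\<chi> i j. complex_of_real (1 / sqrt (1 - (cmod (G n))\<^sup>2)) *
        (if i = 1 \<and> j = 1 then 1
         else if i = 1 \<and> j = 2 then cnj (G n) * z powi (-n)
         else if i = 2 \<and> j = 1 then G n * z powi n
         else 1))"

fun transfer :: "(int \<Rightarrow> complex) \<Rightarrow> complex \<Rightarrow> int \<Rightarrow> nat \<Rightarrow> complex^2^2" where
  "transfer G z lo 0 = mat 1"
| "transfer G z lo (Suc k) = step_mat G z (lo + int k) ** transfer G z lo k"

text \<open>Product over [-K..K]; for finitely supported G this is eventually constant
  (the matrix X above the support), and for G in S*(Z) it is the matrix for G^<K>,
  so the limit below is the paper's a(z,G), b(z,G) in both cases.\<close>
definition frak_a :: "(int \<Rightarrow> complex) \<Rightarrow> complex \<Rightarrow> complex" where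
  "frak_a G z = lim (\<lambda>K. transfer G z (- int K) (2 * K + 1) $ 1 $ 1)"

definition frak_b :: "(int \<Rightarrow> complex) \<Rightarrow> complex \<Rightarrow> complex" where
  "frak_b G z = lim (\<lambda>K. transfer G z (- int K) (2 * K + 1) $ 2 $ 1)"

definition pstar :: "(complex \<Rightarrow> complex) \<Rightarrow> complex \<Rightarrow> complex" where
  "pstar f z = cnj (f (inverse (cnj z)))"

definition frak_r :: "(int \<Rightarrow> complex) \<Rightarrow> complex \<Rightarrow> complex" where
  "frak_r G z = frak_b G z / pstar (frak_a G) z"

end

theory Submission
  imports Defs
begin

definition pmul :: "complex \<times> complex \<Rightarrow> complex \<times> complex \<Rightarrow> complex \<times> complex" where
  "pmul p q = (fst p * fst q + cnj (snd p) * snd q, snd p * fst q + cnj (fst p) * snd q)"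

definition mat_of :: "complex \<times> complex \<Rightarrow> complex^2^2" where
  "mat_of p = (\<chi> i j. if i = 1 \<and> j = 1 then fst p else if i = 1 \<and> j = 2 then cnj (snd p)
      else if i = 2 \<and> j = 1 then snd p else cnj (fst p))"

definition cf :: "(int \<Rightarrow> complex) \<Rightarrow> int \<Rightarrow> real" where
  "cf G n = 1 / sqrt (1 - (cmod (G n))\<^sup>2)"

definition stp :: "(int \<Rightarrow> complex) \<Rightarrow> complex \<Rightarrow> int \<Rightarrow> complex \<times> complex" where
  "stp G z n = (complex_of_real (cf G n), complex_of_real (cf G n) * G n * z powi n)"

fun tp :: "(int \<Rightarrow> complex) \<Rightarrow> complex \<Rightarrow> int \<Rightarrow> nat \<Rightarrow> complex \<times> complex" where
  "tp G z lo 0 = (1, 0)"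
| "tp G z lo (Suc k) = pmul (stp G z (lo + int k)) (tp G z lo k)"

lemma pmul_assoc: "pmul (pmul p q) r = pmul p (pmul q r)"
  by (simp add: pmul_def algebra_simps)

lemma mat_of_mult: "mat_of p ** mat_of q = mat_of (pmul p q)"
  unfolding mat_of_def pmul_def matrix_matrix_mult_def
  by (simp add: vec_eq_iff sum_2 algebra_simps) (metis exhaust_2)

lemma mat_of_one: "mat 1 = mat_of (1, 0)"
  unfolding mat_of_def mat_def
  by (simp add: vec_eq_iff forall_2)

lemma step_mat_eq: assumes "cmod z = 1" shows "step_mat G z n = mat_of (stp G z n)"
proof -
  have z0: "z \<noteq> 0" using assms by auto
  have "cnj z = inverse z" using assms
    by (metis complex_div_cnj div_by_1 inverse_eq_divide mult.commute nonzero_mult_div_cancel_left norm_eq_zero of_real_1 one_power2 zero_neq_one)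
  then have "cnj (z powi n) = z powi (-n)" by (simp add: power_int_minus power_int_inverse)
  then show ?thesis
    unfolding step_mat_def mat_of_def stp_def cf_def
    by (simp add: vec_eq_iff)
qed

lemma transfer_tp: assumes "cmod z = 1" shows "transfer G z lo k = mat_of (tp G z lo k)"
  by (induction k) (simp_all add: mat_of_one step_mat_eq[OF assms] mat_of_mult)

lemma pmul_one_left[simp]: "pmul (1, 0) p = p" by (simp add: pmul_def)
lemma pmul_one_right[simp]: "pmul p (1, 0) = p" by (simp add: pmul_def)

lemma tp_add: "tp G z lo (k + m) = pmul (tp G z (lo + int k) m) (tp G z lo k)"
  by (induction m) (simp_all add: pmul_assoc algebra_simps)

lemma stp_zero: "G n = 0 \<Longrightarrow> stp G z n = (1, 0)"
  by (simp add: stp_def cf_def)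

lemma tp_zero: "(\<And>j. j < m \<Longrightarrow> G (lo + int j) = 0) \<Longrightarrow> tp G z lo m = (1, 0)"
  by (induction m) (simp_all add: stp_zero)

lemma tp_cong: "(\<And>j. j < m \<Longrightarrow> G (lo + int j) = H (lo + int j)) \<Longrightarrow> tp G z lo m = tp H z lo m"
  by (induction m) (simp_all add: stp_def cf_def)

lemma cnj_unit: "cmod z = 1 \<Longrightarrow> cnj z * z = 1"
  by (metis complex_norm_square mult.commute of_real_1 one_power2)

lemma tp_shift: assumes "cmod z = 1"
  shows "tp (shift M G) z (lo + M) m = (fst (tp G z lo m), z powi M * snd (tp G z lo m))"
proof (induction m)
  case 0 then show ?case by simp
next
  case (Suc m)
  have z0: "z \<noteq> 0" using assms by auto
  have w: "cmod (z powi M) = 1" using assms by (simp add: norm_power_int)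
  have cw: "cnj (z powi M) * z powi M = 1" using cnj_unit[OF w] .
  have e1: "shift M G (lo + M + int m) = G (lo + int m)" by (simp add: shift_def)
  have e3: "cf (shift M G) (lo + M + int m) = cf G (lo + int m)" by (simp add: cf_def e1)
  have e2: "z powi (lo + M + int m) = z powi M * z powi (lo + int m)"
    using z0 by (simp add: power_int_add algebra_simps)
  show ?case
  proof -
    obtain a b where ab: "tp G z lo m = (a, b)" by fastforce
    define c where "c = complex_of_real (cf G (lo + int m))"
    define g where "g = G (lo + int m)"
    define u where "u = z powi (lo + int m)"
    define w where "w = z powi M"
    have cc: "cnj c = c" by (simp add: c_def)
    have cw': "cnj w * w = 1" using cw by (simp add: w_def)
    have "tp (shift M G) z (lo + M) (Suc m) = pmul (c, c * g * (w * u)) (a, w * b)"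
      using Suc ab by (simp add: stp_def c_def g_def u_def w_def e1 e2 e3)
    also have "\<dots> = (c * a + cnj (c * g * u) * (cnj w * w) * b, w * (c * g * u * a + c * b))"
      by (simp add: pmul_def algebra_simps cc)
    also have "\<dots> = (fst (tp G z lo (Suc m)), z powi M * snd (tp G z lo (Suc m)))"
      using ab cw by (simp add: cw' pmul_def stp_def c_def g_def u_def w_def cc add.assoc)
    finally show ?thesis .
  qed
qed

definition pdet :: "complex \<times> complex \<Rightarrow> real" where
  "pdet p = (cmod (fst p))\<^sup>2 - (cmod (snd p))\<^sup>2"

lemma pdet_mul: "pdet (pmul p q) = pdet p * pdet q"
proof -
  obtain a1 b1 a2 b2 where p: "p = (a1, b1)" and q: "q = (a2, b2)" by fastforce
  have "complex_of_real (pdet (pmul p q)) =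
    (a1 * a2 + cnj b1 * b2) * (cnj a1 * cnj a2 + b1 * cnj b2)
    - (b1 * a2 + cnj a1 * b2) * (cnj b1 * cnj a2 + a1 * cnj b2)"
    unfolding pdet_def pmul_def p q of_real_diff complex_norm_square by simp
  also have "\<dots> = (a1 * cnj a1 - b1 * cnj b1) * (a2 * cnj a2 - b2 * cnj b2)"
    by algebra
  also have "\<dots> = complex_of_real (pdet p * pdet q)"
    unfolding pdet_def p q of_real_diff of_real_mult complex_norm_square by simp
  finally show ?thesis by (simp only: of_real_eq_iff)
qed

lemma pdet_stp: assumes "cmod z = 1" "cmod (G n) < 1" shows "pdet (stp G z n) = 1"
proof -
  have "cmod (z powi n) = 1" using assms by (simp add: norm_power_int)
  moreover have "(cmod (G n))\<^sup>2 < 1" using assms(2) by (simp add: abs_square_less_1)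
  then have p: "0 < 1 - (cmod (G n))\<^sup>2" by simp
  define c where "c = cf G n"
  have c0: "0 \<le> c" using p by (simp add: c_def cf_def)
  have c2: "c\<^sup>2 * (1 - (cmod (G n))\<^sup>2) = 1" using p
    by (simp add: c_def cf_def power_divide)
  ultimately have "pdet (stp G z n) = c\<^sup>2 - c\<^sup>2 * (cmod (G n))\<^sup>2"
    unfolding pdet_def stp_def c_def[symmetric] using c0
    by (simp add: norm_mult power_mult_distrib)
  also have "\<dots> = 1" using c2 by (simp add: algebra_simps)
  finally show ?thesis .
qed

lemma pdet_tp: assumes "cmod z = 1" "\<And>n. cmod (G n) < 1" shows "pdet (tp G z lo k) = 1"
proof (induction k)
  case 0 then show ?case by (simp add: pdet_def)
next
  case (Suc k) then show ?case by (simp only: tp.simps pdet_mul pdet_stp[OF assms(1) assms(2)])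
qed

definition pn :: "complex \<times> complex \<Rightarrow> real" where
  "pn p = cmod (fst p) + cmod (snd p)"

lemma pn_nonneg: "0 \<le> pn p" by (simp add: pn_def)

lemma pn_mul: "pn (pmul p q) \<le> pn p * pn q"
proof -
  have "pn (pmul p q) \<le> (cmod (fst p) * cmod (fst q) + cmod (snd p) * cmod (snd q)) +
      (cmod (snd p) * cmod (fst q) + cmod (fst p) * cmod (snd q))"
    unfolding pn_def pmul_def
    by (intro add_mono) (auto intro!: order.trans[OF norm_triangle_ineq] simp: norm_mult)
  also have "\<dots> = pn p * pn q" by (simp add: pn_def algebra_simps)
  finally show ?thesis .
qed

lemma pn_add: "pn (p + q) \<le> pn p + pn q"
  unfolding pn_def using norm_triangle_ineq[of "fst p" "fst q"] norm_triangle_ineq[of "snd p" "snd q"]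
  by simp

lemma pmul_diff_left: "pmul (p - q) r = pmul p r - pmul q r"
  by (simp add: pmul_def algebra_simps)

lemma pmul_diff_right: "pmul r (p - q) = pmul r p - pmul r q"
  by (simp add: pmul_def algebra_simps)

lemma cf_bounds:
  assumes "cmod (G n) \<le> \<rho>" "\<rho> < 1"
  shows "1 \<le> cf G n" "cf G n \<le> 1 / sqrt (1 - \<rho>\<^sup>2)"
    "cf G n - 1 \<le> cmod (G n) / sqrt (1 - \<rho>\<^sup>2)"
proof -
  define x where "x = cmod (G n)"
  have x0: "0 \<le> x" "x \<le> \<rho>" using assms by (auto simp: x_def)
  have r0: "0 \<le> \<rho>" using x0 by linarith
  have x2: "x\<^sup>2 \<le> \<rho>\<^sup>2" using x0 by (simp add: power_mono)
  have rr: "\<rho>\<^sup>2 < 1" using r0 assms(2) by (simp add: power_less_one_iff abs_square_less_1)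
  define s where "s = sqrt (1 - x\<^sup>2)"
  define \<sigma> where "\<sigma> = sqrt (1 - \<rho>\<^sup>2)"
  have sig: "0 < \<sigma>" using rr by (simp add: \<sigma>_def)
  have ss: "\<sigma> \<le> s" unfolding s_def \<sigma>_def using x2 by simp
  have s1: "s \<le> 1" unfolding s_def using x0 by simp
  have s0: "0 < s" using sig ss by linarith
  have cfd: "cf G n = 1 / s" by (simp add: cf_def s_def x_def)
  show "1 \<le> cf G n" using s0 s1 by (simp add: cfd)
  show "cf G n \<le> 1 / sqrt (1 - \<rho>\<^sup>2)" using sig ss by (simp add: cfd frac_le flip: \<sigma>_def)
  have "x\<^sup>2 \<le> 1" using x2 rr by linarith
  then have sq: "s\<^sup>2 = 1 - x\<^sup>2" unfolding s_def by simp
  have "1 - s \<le> 1 - s\<^sup>2" using s0 s1 by (simp add: power2_eq_square mult_le_cancel_left1)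
  also have "\<dots> = x\<^sup>2" using sq by simp
  also have "\<dots> \<le> x" using x0 assms(2) unfolding power2_eq_square
    by (intro mult_left_le) auto
  finally have "1 - s \<le> x" .
  then have "(1 - s) / s \<le> x / \<sigma>" using s0 sig ss x0
    by (intro frac_le) auto
  moreover have "cf G n - 1 = (1 - s) / s" using s0 by (simp add: cfd field_simps)
  ultimately show "cf G n - 1 \<le> cmod (G n) / sqrt (1 - \<rho>\<^sup>2)" by (simp add: x_def \<sigma>_def)
qed

lemma stp_bounds:
  assumes "cmod z = 1" "cmod (G n) \<le> \<rho>" "\<rho> < 1"
  shows "pn (stp G z n - (1, 0)) \<le> 2 / sqrt (1 - \<rho>\<^sup>2) * cmod (G n)"
    "pn (stp G z n) \<le> 1 + 2 / sqrt (1 - \<rho>\<^sup>2) * cmod (G n)"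
proof -
  note cb = cf_bounds[of G n \<rho>, OF assms(2,3)]
  have zn: "cmod (z powi n) = 1" using assms by (simp add: norm_power_int)
  have "complex_of_real (cf G n) - 1 = complex_of_real (cf G n - 1)" by simp
  then have "cmod (complex_of_real (cf G n) - 1) = cf G n - 1"
    using cb(1) by (simp only: norm_of_real)
  moreover have "cmod (complex_of_real (cf G n) * G n * z powi n) = cf G n * cmod (G n)"
    using cb(1) zn by (simp add: norm_mult)
  moreover have "cf G n * cmod (G n) \<le> 1 / sqrt (1 - \<rho>\<^sup>2) * cmod (G n)"
    using cb(2) by (intro mult_right_mono) auto
  moreover have "cmod (complex_of_real (cf G n)) = cf G n" using cb(1) by simp
  ultimately show "pn (stp G z n - (1, 0)) \<le> 2 / sqrt (1 - \<rho>\<^sup>2) * cmod (G n)"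
    "pn (stp G z n) \<le> 1 + 2 / sqrt (1 - \<rho>\<^sup>2) * cmod (G n)"
    using cb(3) unfolding pn_def stp_def by auto
qed

lemma ulim_tel:
  fixes f :: "nat \<Rightarrow> 'a \<Rightarrow> 'b::banach"
  assumes "\<And>k z. z \<in> S \<Longrightarrow> norm (f (Suc k) z - f k z) \<le> M k" "summable M"
  shows "uniform_limit S f (\<lambda>z. lim (\<lambda>k. f k z)) sequentially"
proof -
  have "uniform_limit S (\<lambda>n z. \<Sum>i<n. (f (Suc i) z - f i z)) (\<lambda>z. suminf (\<lambda>i. f (Suc i) z - f i z)) sequentially"
    using assms by (intro Weierstrass_m_test) auto
  then have "uniform_limit S (\<lambda>n z. f n z - f 0 z) (\<lambda>z. suminf (\<lambda>i. f (Suc i) z - f i z)) sequentially"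
  proof -
    have "\<And>n z. (\<Sum>i<n. f (Suc i) z - f i z) = f n z - f 0 z"
      by (rule sum_lessThan_telescope)
    then show "?thesis" using \<open>uniform_limit S (\<lambda>n z. \<Sum>i<n. (f (Suc i) z - f i z)) _ _\<close> by simp
  qed
  then have U: "uniform_limit S (\<lambda>n z. (f n z - f 0 z) + f 0 z) (\<lambda>z. suminf (\<lambda>i. f (Suc i) z - f i z) + f 0 z) sequentially"
    by (intro uniform_limit_add uniform_limit_const)
  have "uniform_limit S f (\<lambda>z. suminf (\<lambda>i. f (Suc i) z - f i z) + f 0 z) sequentially"
    using U by simp
  moreover have "\<And>z. z \<in> S \<Longrightarrow> suminf (\<lambda>i. f (Suc i) z - f i z) + f 0 z = lim (\<lambda>k. f k z)"
    using tendsto_uniform_limitI[OF calculation] by (metis limI)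
  ultimately show ?thesis
    using uniform_limit_cong[where f=f and g=f and F=sequentially and X=S and h="\<lambda>z. suminf (\<lambda>i. f (Suc i) z - f i z) + f 0 z" and i="\<lambda>z. lim (\<lambda>k. f k z)"]
    by auto
qed

definition Q :: "(int \<Rightarrow> complex) \<Rightarrow> complex \<Rightarrow> nat \<Rightarrow> complex \<times> complex" where
  "Q G z K = tp G z (- int K) (2 * K + 1)"

lemma Q_0: "Q G z 0 = stp G z 0"
  by (simp add: Q_def)

lemma Q_Suc: "Q G z (Suc K) = pmul (stp G z (int K + 1)) (pmul (Q G z K) (stp G z (- int K - 1)))"
proof -
  have e2: "- int K - 1 + int (1 + (2 * K + 1)) = int K + 1" by simp
  have e: "2 * Suc K + 1 = Suc (1 + (2 * K + 1))" "- int (Suc K) = - int K - 1" by simp_all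
  have "Q G z (Suc K) = tp G z (- int K - 1) (Suc (1 + (2 * K + 1)))"
    unfolding Q_def e by (rule refl)
  also have "tp G z (- int K - 1) (Suc (1 + (2 * K + 1))) = pmul (stp G z (int K + 1)) (tp G z (- int K - 1) (1 + (2 * K + 1)))"
    by (simp only: tp.simps e2)
  also have "tp G z (- int K - 1) (1 + (2 * K + 1)) = pmul (Q G z K) (stp G z (- int K - 1))"
    by (simp only: tp_add) (simp add: Q_def)
  finally show ?thesis .
qed

lemma Q_diff: "Q G z (Suc K) - Q G z K =
   pmul (stp G z (int K + 1) - (1, 0)) (pmul (Q G z K) (stp G z (- int K - 1)))
   + pmul (Q G z K) (stp G z (- int K - 1) - (1, 0))"
  by (simp add: Q_Suc pmul_diff_left pmul_diff_right)

lemma Q_conv: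
  assumes rho: "\<And>n. cmod (G n) \<le> \<rho>" "\<rho> < 1"
    and su: "summable (\<lambda>k. cmod (G (int k)) + cmod (G (- int k)))"
  shows "\<exists>B. \<forall>z\<in>sphere 0 1. \<forall>K. pn (Q G z K) \<le> B"
    "uniform_limit (sphere 0 1) (\<lambda>K z. fst (Q G z K)) (\<lambda>z. lim (\<lambda>K. fst (Q G z K))) sequentially"
    "uniform_limit (sphere 0 1) (\<lambda>K z. snd (Q G z K)) (\<lambda>z. lim (\<lambda>K. snd (Q G z K))) sequentially"
proof -
  have eG: "\<And>K::nat. cmod (G (- int K - 1)) = cmod (G (- 1 - int K))" by (rule arg_cong[where f="\<lambda>x. cmod (G x)"]) simp
  define \<kappa> where "\<kappa> = 2 / sqrt (1 - \<rho>\<^sup>2)"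
  define u where "u k = cmod (G (int k)) + cmod (G (- int k))" for k
  have r0: "0 \<le> \<rho>" using rho(1)[of 0] norm_ge_zero order.trans by blast
  have "\<rho>\<^sup>2 \<le> 1" using r0 rho(2) by (simp add: power_le_one)
  then have k0: "0 \<le> \<kappa>" unfolding \<kappa>_def by simp
  have u0: "0 \<le> u k" for k by (simp add: u_def)
  have su': "summable u" using su by (simp add: u_def[abs_def])
  have sb: "pn (stp G z n) \<le> exp (\<kappa> * cmod (G n))" if "cmod z = 1" for z n
    using stp_bounds(2)[where G=G and n=n, OF that rho(1)[of n] rho(2)] exp_ge_add_one_self[of "\<kappa> * cmod (G n)"]
    unfolding \<kappa>_def by linarith
  have sd: "pn (stp G z n - (1, 0)) \<le> \<kappa> * cmod (G n)" if "cmod z = 1" for z n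
    using stp_bounds(1)[where G=G and n=n, OF that rho(1)[of n] rho(2)] unfolding \<kappa>_def by linarith
  have sb2: "pn (stp G z n) \<le> 1 + \<kappa> * \<rho>" if "cmod z = 1" for z n
    using stp_bounds(2)[where G=G and n=n, OF that rho(1)[of n] rho(2)] mult_left_mono[OF rho(1)[of n] k0]
    unfolding \<kappa>_def by linarith
  have QB: "pn (Q G z K) \<le> exp (\<kappa> * (\<Sum>k\<le>K. u k))" if z: "cmod z = 1" for z K
  proof (induction K)
    case 0
    have "pn (Q G z 0) \<le> exp (\<kappa> * cmod (G 0))" using sb[OF z] by (simp add: Q_0)
    also have "\<dots> \<le> exp (\<kappa> * u 0)" using k0 by (simp add: u_def mult_left_mono)
    finally show ?case by simp
  next
    case (Suc K)
    have "pn (Q G z (Suc K)) \<le> pn (stp G z (int K + 1)) * (pn (Q G z K) * pn (stp G z (- int K - 1)))"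
      unfolding Q_Suc
      by (rule order.trans[OF pn_mul]) (intro mult_left_mono pn_mul pn_nonneg)
    also have "\<dots> \<le> exp (\<kappa> * cmod (G (int K + 1))) * (exp (\<kappa> * (\<Sum>k\<le>K. u k)) * exp (\<kappa> * cmod (G (- int K - 1))))"
      using Suc sb[OF z] by (intro mult_mono pn_nonneg mult_nonneg_nonneg) auto
    also have "\<dots> = exp (\<kappa> * (\<Sum>k\<le>Suc K. u k))"
      using eG
      by (simp only: eG) (simp add: u_def exp_add[symmetric] algebra_simps)
    finally show ?case .
  qed
  define B where "B = exp (\<kappa> * suminf u)"
  have QB': "pn (Q G z K) \<le> B" if z: "cmod z = 1" for z K
  proof -
    have "(\<Sum>k\<le>K. u k) \<le> suminf u" using su' u0 by (intro sum_le_suminf) auto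
    then show ?thesis using QB[OF z, of K] k0 unfolding B_def
      by (meson exp_le_cancel_iff mult_left_mono order.trans)
  qed
  then show "\<exists>B. \<forall>z\<in>sphere 0 1. \<forall>K. pn (Q G z K) \<le> B" by (intro exI[of _ B]) simp
  have B0: "0 \<le> B" by (simp add: B_def)
  define M where "M K = \<kappa> * B * (1 + \<kappa> * \<rho>) * u (Suc K)" for K
  have sM: "summable M" unfolding M_def
    by (intro summable_mult) (simp add: summable_Suc_iff su')
  have D: "pn (Q G z (Suc K) - Q G z K) \<le> M K" if z: "cmod z = 1" for z K
  proof -
    have "pn (Q G z (Suc K) - Q G z K) \<le> pn (stp G z (int K + 1) - (1, 0)) * (pn (Q G z K) * pn (stp G z (- int K - 1)))
       + pn (Q G z K) * pn (stp G z (- int K - 1) - (1, 0))"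
      unfolding Q_diff
      by (rule order.trans[OF pn_add], intro add_mono order.trans[OF pn_mul] pn_mul mult_left_mono pn_nonneg order.refl)
    also have "\<dots> \<le> (\<kappa> * cmod (G (int K + 1))) * (B * (1 + \<kappa> * \<rho>)) + B * (\<kappa> * cmod (G (- int K - 1)))"
      using sd[OF z] sb2[OF z] QB'[OF z] B0 k0 r0
      by (intro add_mono mult_mono pn_nonneg mult_nonneg_nonneg) auto
    also have "\<dots> \<le> (\<kappa> * cmod (G (int K + 1))) * (B * (1 + \<kappa> * \<rho>)) + (B * (1 + \<kappa> * \<rho>)) * (\<kappa> * cmod (G (- int K - 1)))"
    proof -
      have "0 \<le> B * (\<kappa> * \<rho>)" using B0 k0 r0 by simp
      then have "B \<le> B * (1 + \<kappa> * \<rho>)" by (simp add: distrib_left)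
      then show ?thesis using B0 k0 by (intro add_mono mult_right_mono) auto
    qed
    also have "\<dots> = M K" using eG by (simp only: eG) (simp add: M_def u_def algebra_simps)
    finally show ?thesis .
  qed
  show "uniform_limit (sphere 0 1) (\<lambda>K z. fst (Q G z K)) (\<lambda>z. lim (\<lambda>K. fst (Q G z K))) sequentially"
    using D sM apply (intro ulim_tel[where M=M])
    by (simp_all add: pn_def) (smt (verit) norm_ge_zero)
  show "uniform_limit (sphere 0 1) (\<lambda>K z. snd (Q G z K)) (\<lambda>z. lim (\<lambda>K. snd (Q G z K))) sequentially"
    using D sM apply (intro ulim_tel[where M=M])
    by (simp_all add: pn_def) (smt (verit) norm_ge_zero)
qed

lemma frak_a_Q: "cmod z = 1 \<Longrightarrow> frak_a G z = lim (\<lambda>K. fst (Q G z K))"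
  unfolding frak_a_def Q_def by (simp only: transfer_tp) (simp add: mat_of_def del: tp.simps)

lemma frak_b_Q: "cmod z = 1 \<Longrightarrow> frak_b G z = lim (\<lambda>K. snd (Q G z K))"
  unfolding frak_b_def Q_def by (simp only: transfer_tp) (simp add: mat_of_def del: tp.simps)

lemma Q_support:
  assumes "\<And>n. n < lo \<or> lo + int m \<le> n \<Longrightarrow> H n = 0" "- int K \<le> lo" "lo + int m \<le> int K + 1"
  shows "Q H z K = tp H z lo m"
proof -
  define p where "p = nat (lo + int K)"
  define r where "r = nat (int K + 1 - lo - int m)"
  have e: "2 * K + 1 = p + m + r" using assms(2,3) unfolding p_def r_def by linarith
  have lo: "- int K + int p = lo" using assms(2) unfolding p_def by linarith
  have "Q H z K = pmul (tp H z (- int K + int (p + m)) r) (pmul (tp H z (- int K + int p) m) (tp H z (- int K) p))"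
    unfolding Q_def e tp_add by simp
  also have "tp H z (- int K + int (p + m)) r = (1, 0)"
    by (rule tp_zero, rule assms(1)) (use lo in auto)
  also have "tp H z (- int K) p = (1, 0)"
    by (rule tp_zero, rule assms(1)) (use lo in auto)
  finally show ?thesis using lo by simp
qed

lemma lim_ev_const: "(\<And>K. K \<ge> K0 \<Longrightarrow> f K = c) \<Longrightarrow> lim f = c"
  by (rule limI, rule tendsto_eventually) (auto simp: eventually_sequentially)

lemma frak_trunc:
  assumes z: "cmod z = 1"
  shows "frak_a (trunc (int N) F) z = fst (Q F z N)" "frak_b (trunc (int N) F) z = snd (Q F z N)"
proof -
  have "Q (trunc (int N) F) z K = Q F z N" if "K \<ge> N" for K
  proof -
    have "Q (trunc (int N) F) z K = tp (trunc (int N) F) z (- int N) (2 * N + 1)"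
      by (rule Q_support) (use that in \<open>auto simp: trunc_def\<close>)
    also have "\<dots> = Q F z N" unfolding Q_def
      by (rule tp_cong) (auto simp: trunc_def)
    finally show ?thesis .
  qed
  then show "frak_a (trunc (int N) F) z = fst (Q F z N)" "frak_b (trunc (int N) F) z = snd (Q F z N)"
    by (simp_all only: frak_a_Q[OF z] frak_b_Q[OF z]) (rule lim_ev_const[of N], simp)+
qed

lemma frak_H:
  fixes F G :: "int \<Rightarrow> complex"
  assumes z: "cmod z = 1" and N: "N \<ge> 1"
  defines "H \<equiv> (\<lambda>n. trunc (int N) F n + shift (3 * int N) (trunc (int N) G) n)"
  shows "frak_a H z = fst (pmul (fst (Q G z N), z powi (3 * int N) * snd (Q G z N)) (Q F z N))"
    "frak_b H z = snd (pmul (fst (Q G z N), z powi (3 * int N) * snd (Q G z N)) (Q F z N))"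
proof -
  have P: "tp H z (- int N) (5 * N + 1) = pmul (fst (Q G z N), z powi (3 * int N) * snd (Q G z N)) (Q F z N)"
  proof -
    have e: "5 * N + 1 = (2 * N + 1) + (N - 1) + (2 * N + 1)" using N by simp
    have l1: "- int N + int (2 * N + 1) = int N + 1" by simp
    have l2: "- int N + int (2 * N + 1 + (N - 1)) = - int N + 3 * int N" using N by simp
    have "tp H z (- int N) (5 * N + 1) = pmul (tp H z (- int N + 3 * int N) (2 * N + 1))
        (pmul (tp H z (int N + 1) (N - 1)) (tp H z (- int N) (2 * N + 1)))"
      unfolding e tp_add l1 l2 by simp
    also have "tp H z (int N + 1) (N - 1) = (1, 0)"
      by (rule tp_zero) (auto simp: H_def trunc_def shift_def)
    also have "tp H z (- int N) (2 * N + 1) = Q F z N"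
      unfolding Q_def by (rule tp_cong) (use N in \<open>auto simp: H_def trunc_def shift_def\<close>)
    also have "tp H z (- int N + 3 * int N) (2 * N + 1) = tp (shift (3 * int N) G) z (- int N + 3 * int N) (2 * N + 1)"
      by (rule tp_cong) (use N in \<open>auto simp: H_def trunc_def shift_def\<close>)
    also have "\<dots> = (fst (Q G z N), z powi (3 * int N) * snd (Q G z N))"
      unfolding Q_def by (rule tp_shift[OF z])
    finally show ?thesis by simp
  qed
  have "Q H z K = tp H z (- int N) (5 * N + 1)" if "K \<ge> 4 * N" for K
    by (rule Q_support) (use that in \<open>auto simp: H_def trunc_def shift_def\<close>)
  then show "frak_a H z = fst (pmul (fst (Q G z N), z powi (3 * int N) * snd (Q G z N)) (Q F z N))"
    "frak_b H z = snd (pmul (fst (Q G z N), z powi (3 * int N) * snd (Q G z N)) (Q F z N))"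
    using P by (simp_all only: frak_a_Q[OF z] frak_b_Q[OF z]) (rule lim_ev_const[of "4*N"], simp)+
qed

lemma Sstar_conv:
  assumes "F \<in> Sstar"
  shows "uniform_limit (sphere 0 1) (\<lambda>K z. fst (Q F z K)) (frak_a F) sequentially"
    "uniform_limit (sphere 0 1) (\<lambda>K z. snd (Q F z K)) (frak_b F) sequentially"
    "\<exists>B. \<forall>z\<in>sphere 0 1. \<forall>K. pn (Q F z K) \<le> B"
    "\<And>n. cmod (F n) < 1"
proof -
  obtain \<rho> where r: "\<rho> < 1" "\<And>n. cmod (F n) \<le> \<rho>" using assms unfolding Sstar_def by blast
  obtain C where C: "\<And>n. cmod (F n) \<le> C * (1 + real_of_int \<bar>n\<bar>) powr (-2)"
    using assms unfolding Sstar_def by fastforce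
  show "\<And>n. cmod (F n) < 1" using r by (meson order.strict_trans1)
  have s1: "summable (\<lambda>k. real k powr (-2))" by (simp add: summable_real_powr_iff)
  then have s2: "summable (\<lambda>k. real (Suc k) powr (-2))" using summable_Suc_iff[where f="\<lambda>k. real k powr (-2)"] by simp
  have su: "summable (\<lambda>k. cmod (F (int k)) + cmod (F (- int k)))"
  proof (rule summable_comparison_test[OF _ summable_mult[OF s2, of "2 * C"]])
    show "\<exists>N. \<forall>n\<ge>N. norm (cmod (F (int n)) + cmod (F (- int n))) \<le> 2 * C * real (Suc n) powr - 2"
    proof (intro exI allI impI)
      fix n :: nat
      have "cmod (F (int n)) \<le> C * real (Suc n) powr - 2" "cmod (F (- int n)) \<le> C * real (Suc n) powr - 2"
        using C[of "int n"] C[of "- int n"] by (simp_all add: add.commute)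
      then show "norm (cmod (F (int n)) + cmod (F (- int n))) \<le> 2 * C * real (Suc n) powr - 2" by simp
    qed
  qed
  note qc = Q_conv[OF r(2) r(1) su]
  show "\<exists>B. \<forall>z\<in>sphere 0 1. \<forall>K. pn (Q F z K) \<le> B" by (rule qc(1))
  show "uniform_limit (sphere 0 1) (\<lambda>K z. fst (Q F z K)) (frak_a F) sequentially"
    using qc(2) by (rule uniform_limit_cong[THEN iffD1, rotated 2]) (auto simp: frak_a_Q)
  show "uniform_limit (sphere 0 1) (\<lambda>K z. snd (Q F z K)) (frak_b F) sequentially"
    using qc(3) by (rule uniform_limit_cong[THEN iffD1, rotated 2]) (auto simp: frak_b_Q)
qed

lemma real_core:
  fixes p q s t :: real
  assumes "0 \<le> p" "0 \<le> q" "0 \<le> s" "0 \<le> t" "p\<^sup>2 = 1 + q\<^sup>2" "s\<^sup>2 = 1 + t\<^sup>2"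
  shows "s - t \<le> p * (s * p - t * q)" "t < s"
proof -
  have "t\<^sup>2 < s\<^sup>2" using assms by simp
  then show ts: "t < s" using assms(3,4) by (simp add: power_less_imp_less_base)
  have "0 \<le> (p - q)\<^sup>2" by simp
  then have "2 * (p * q) \<le> p\<^sup>2 + q\<^sup>2" by (simp add: power2_eq_square algebra_simps)
  then have pq: "p * q \<le> 1 + q\<^sup>2" using assms(5) by (simp add: power2_eq_square)
  have "t * (p * q) \<le> t * (1 + q\<^sup>2)" using pq assms(4) by (rule mult_left_mono)
  moreover have "t * q\<^sup>2 \<le> s * q\<^sup>2" using ts by (simp add: mult_right_mono)
  ultimately have "t * (p * q) \<le> t + s * q\<^sup>2" by (simp add: algebra_simps)
  moreover have "p\<^sup>2 * s = s + q\<^sup>2 * s" using assms(5) by (simp add: distrib_right)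
  moreover have "p * (s * p - t * q) = p\<^sup>2 * s - t * (p * q)" by (simp add: power2_eq_square algebra_simps)
  ultimately show "s - t \<le> p * (s * p - t * q)" by (simp add: algebra_simps)
qed

lemma core:
  fixes a b \<alpha> \<beta> :: complex
  assumes d1: "(cmod a)\<^sup>2 - (cmod b)\<^sup>2 = 1" and d2: "(cmod \<alpha>)\<^sup>2 - (cmod \<beta>)\<^sup>2 = 1"
  shows "cmod ((\<beta> * a + cnj \<alpha> * b) / cnj (\<alpha> * a + cnj \<beta> * b) - b / cnj a)
     \<le> (cmod \<beta> / cmod \<alpha>) / (1 - cmod \<beta> / cmod \<alpha>)"
proof -
  define A where "A = \<alpha> * a + cnj \<beta> * b"
  define Bv where "Bv = \<beta> * a + cnj \<alpha> * b"
  note rc = real_core[of "cmod a" "cmod b" "cmod \<alpha>" "cmod \<beta>"]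
  have rc1: "cmod \<alpha> - cmod \<beta> \<le> cmod a * (cmod \<alpha> * cmod a - cmod \<beta> * cmod b)"
    and rc2: "cmod \<beta> < cmod \<alpha>" using rc d1 d2 by auto
  have pos: "0 < cmod \<alpha> - cmod \<beta>" using rc2 by simp
  have "cmod \<alpha> * cmod a - cmod \<beta> * cmod b \<le> cmod A"
  proof -
    have "cmod (\<alpha> * a) \<le> cmod A + cmod (cnj \<beta> * b)"
      unfolding A_def by (metis add_diff_cancel_right' norm_triangle_ineq4 order.trans norm_minus_commute order.refl norm_diff_ineq add.commute diff_le_eq)
    then show ?thesis by (simp add: norm_mult)
  qed
  then have Aa: "cmod \<alpha> - cmod \<beta> \<le> cmod a * cmod A"
    using rc1 norm_ge_zero[of a] by (meson mult_left_mono order.trans)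
  then have A0: "A \<noteq> 0" and a0: "a \<noteq> 0" using pos by auto
  have key: "Bv * cnj a - b * cnj A = \<beta> * (a * cnj a - b * cnj b)"
    unfolding A_def Bv_def by (simp add: algebra_simps)
  have "a * cnj a - b * cnj b = complex_of_real ((cmod a)\<^sup>2 - (cmod b)\<^sup>2)"
    by (simp only: of_real_diff complex_norm_square)
  then have key2: "Bv * cnj a - b * cnj A = \<beta>" using key d1 by simp
  have "Bv / cnj A - b / cnj a = (Bv * cnj a - b * cnj A) / (cnj A * cnj a)"
    using A0 a0 by (simp add: field_simps)
  then have "cmod (Bv / cnj A - b / cnj a) = cmod \<beta> / (cmod a * cmod A)"
    using key2 by (simp add: norm_divide norm_mult mult.commute)
  also have "\<dots> \<le> cmod \<beta> / (cmod \<alpha> - cmod \<beta>)"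
    using Aa pos by (intro divide_left_mono) auto
  also have "\<dots> = (cmod \<beta> / cmod \<alpha>) / (1 - cmod \<beta> / cmod \<alpha>)"
  proof -
    have "cmod \<alpha> > 0" using rc2 norm_ge_zero[of \<beta>] by linarith
    then show ?thesis by (simp add: field_simps)
  qed
  finally show ?thesis unfolding A_def Bv_def .
qed

lemma pstar_sphere: "cmod z = 1 \<Longrightarrow> pstar f z = cnj (f z)"
proof -
  assume z: "cmod z = 1"
  then have "cnj z * z = 1" by (rule cnj_unit)
  then have "inverse (cnj z) = z" by (metis inverse_unique)
  then show ?thesis by (simp add: pstar_def)
qed

lemma lim_bound:
  fixes f :: "nat \<Rightarrow> 'a \<Rightarrow> 'b::real_normed_vector"
  assumes "uniform_limit S f L sequentially" "\<And>n z. z \<in> S \<Longrightarrow> norm (f n z) \<le> B" "z \<in> S"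
  shows "norm (L z) \<le> B"
proof -
  have "(\<lambda>n. norm (f n z)) \<longlonglongrightarrow> norm (L z)"
    using tendsto_uniform_limitI[OF assms(1,3)] by (rule tendsto_norm)
  then show ?thesis using assms(2,3)
    by (intro tendsto_le[OF _ tendsto_const, of sequentially "\<lambda>n. norm (f n z)"]) auto
qed

lemma ulim_zero_from:
  fixes E x y :: "nat \<Rightarrow> 'a \<Rightarrow> complex"
  assumes "uniform_limit S x X sequentially" "uniform_limit S y Y sequentially"
    "\<And>N z. N \<ge> 1 \<Longrightarrow> z \<in> S \<Longrightarrow> cmod (E N z) \<le> cmod (x N z - X z) + cmod (y N z - Y z)"
  shows "uniform_limit S E (\<lambda>z. 0) sequentially"
  unfolding uniform_limit_sequentially_iff
proof (intro allI impI)
  fix e :: real assume e: "e > 0"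
  obtain N1 where N1: "\<And>n z. n \<ge> N1 \<Longrightarrow> z \<in> S \<Longrightarrow> dist (x n z) (X z) < e / 2"
    using assms(1) e unfolding uniform_limit_sequentially_iff by (meson half_gt_zero)
  obtain N2 where N2: "\<And>n z. n \<ge> N2 \<Longrightarrow> z \<in> S \<Longrightarrow> dist (y n z) (Y z) < e / 2"
    using assms(2) e unfolding uniform_limit_sequentially_iff by (meson half_gt_zero)
  show "\<exists>N. \<forall>n\<ge>N. \<forall>z\<in>S. dist (E n z) 0 < e"
  proof (intro exI[of _ "max 1 (max N1 N2)"] allI impI ballI)
    fix n z assume n: "max 1 (max N1 N2) \<le> n" and z: "z \<in> S"
    have "cmod (E n z) \<le> cmod (x n z - X z) + cmod (y n z - Y z)" using n z assms(3) by auto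
    also have "\<dots> < e / 2 + e / 2" using N1[of n z] N2[of n z] n z by (intro add_strict_mono) (auto simp: dist_norm)
    finally show "dist (E n z) 0 < e" by simp
  qed
qed

lemma bounded_of_bound: "(\<And>z. z \<in> S \<Longrightarrow> norm (f z) \<le> B) \<Longrightarrow> bounded (f ` S)"
  unfolding bounded_iff by blast

theorem lemma2p2:
  fixes F G :: "int \<Rightarrow> complex"
  assumes "F \<in> Sstar" and "G \<in> Sstar"
  shows "uniform_limit (sphere 0 1)
           (\<lambda>N z. pstar (frak_a (\<lambda>n. trunc (int N) F n + shift (3 * int N) (trunc (int N) G) n)) z
                  - (pstar (frak_a F) z * pstar (frak_a G) z
                     + z ^ (3 * N) * pstar (frak_b F) z * frak_b G z))
           (\<lambda>z. 0) sequentially \<and>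
         uniform_limit (sphere 0 1)
           (\<lambda>N z. frak_b (\<lambda>n. trunc (int N) F n + shift (3 * int N) (trunc (int N) G) n) z
                  - (z ^ (3 * N) * frak_b G z * frak_a F z
                     + frak_b F z * pstar (frak_a G) z))
           (\<lambda>z. 0) sequentially \<and>
         (\<forall>z \<in> sphere 0 1.
           limsup (\<lambda>N. ereal (cmod
              (frak_r (\<lambda>n. trunc (int N) F n + shift (3 * int N) (trunc (int N) G) n) z
               - frak_r (trunc (int N) F) z)))
           \<le> ereal (cmod (frak_r G z) / (1 - cmod (frak_r G z))))"
proof -
  define S :: "complex set" where "S = sphere 0 1"
  have zS: "z \<in> S \<longleftrightarrow> cmod z = 1" for z by (simp add: S_def)
  note cF = Sstar_conv[OF assms(1), folded S_def]
  note cG = Sstar_conv[OF assms(2), folded S_def]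
  obtain BF where BF: "\<And>z K. z \<in> S \<Longrightarrow> pn (Q F z K) \<le> BF" using cF(3) by blast
  obtain BG where BG: "\<And>z K. z \<in> S \<Longrightarrow> pn (Q G z K) \<le> BG" using cG(3) by blast
  have bF1: "cmod (fst (Q F z K)) \<le> BF" "cmod (snd (Q F z K)) \<le> BF" if "z \<in> S" for z K
    using BF[OF that, of K] norm_ge_zero[of "fst (Q F z K)"] norm_ge_zero[of "snd (Q F z K)"]
    unfolding pn_def by linarith+
  have bG1: "cmod (fst (Q G z K)) \<le> BG" "cmod (snd (Q G z K)) \<le> BG" if "z \<in> S" for z K
    using BG[OF that, of K] norm_ge_zero[of "fst (Q G z K)"] norm_ge_zero[of "snd (Q G z K)"]
    unfolding pn_def by linarith+
  have lF: "cmod (frak_a F z) \<le> BF" "cmod (frak_b F z) \<le> BF" if "z \<in> S" for z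
    using lim_bound[OF cF(1) _ that] lim_bound[OF cF(2) _ that] bF1 by auto
  have lG: "cmod (frak_a G z) \<le> BG" "cmod (frak_b G z) \<le> BG" if "z \<in> S" for z
    using lim_bound[OF cG(1) _ that] lim_bound[OF cG(2) _ that] bG1 by auto
  have bdd: "bounded (frak_a F ` S)" "bounded (frak_b F ` S)" "bounded (frak_a G ` S)" "bounded (frak_b G ` S)"
    "bounded ((\<lambda>z. cnj (frak_a F z)) ` S)" "bounded ((\<lambda>z. cnj (frak_b F z)) ` S)"
    "bounded ((\<lambda>z. cnj (frak_a G z)) ` S)"
    using lF lG by (auto intro!: bounded_of_bound)
  have cnjF: "uniform_limit S (\<lambda>K z. cnj (fst (Q F z K))) (\<lambda>z. cnj (frak_a F z)) sequentially"
     "uniform_limit S (\<lambda>K z. cnj (snd (Q F z K))) (\<lambda>z. cnj (frak_b F z)) sequentially"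
    using bounded_linear.uniform_limit[OF bounded_linear_cnj cF(1)]
      bounded_linear.uniform_limit[OF bounded_linear_cnj cF(2)] by auto
  have cnjG: "uniform_limit S (\<lambda>K z. cnj (fst (Q G z K))) (\<lambda>z. cnj (frak_a G z)) sequentially"
    using bounded_linear.uniform_limit[OF bounded_linear_cnj cG(1)] by auto
  define H where "H N = (\<lambda>n. trunc (int N) F n + shift (3 * int N) (trunc (int N) G) n)" for N
  have wz: "z powi (3 * int N) = z ^ (3 * N)" for z :: complex and N
    by (metis of_nat_mult of_nat_numeral power_int_of_nat)
  have wn: "cmod (z ^ n) = 1" if "z \<in> S" for z n using that by (simp add: zS norm_power)
  note fH = frak_H[of _ _ F G, folded H_def, unfolded wz]
  have P1: "uniform_limit S
           (\<lambda>N z. pstar (frak_a (H N)) z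
                  - (pstar (frak_a F) z * pstar (frak_a G) z
                     + z ^ (3 * N) * pstar (frak_b F) z * frak_b G z))
           (\<lambda>z. 0) sequentially"
  proof (rule ulim_zero_from[OF uniform_lim_mult[OF cG(1) cF(1) bdd(3) bdd(1)]
          uniform_lim_mult[OF cG(2) cnjF(2) bdd(4) bdd(6)]])
    fix N z assume N: "N \<ge> (1::nat)" and z: "z \<in> S"
    have z1: "cmod z = 1" using z zS by simp
    have "pstar (frak_a (H N)) z - (pstar (frak_a F) z * pstar (frak_a G) z
                     + z ^ (3 * N) * pstar (frak_b F) z * frak_b G z)
        = cnj (fst (Q G z N) * fst (Q F z N) - frak_a G z * frak_a F z)
          + z ^ (3 * N) * (snd (Q G z N) * cnj (snd (Q F z N)) - frak_b G z * cnj (frak_b F z))"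
    proof -
      have e1: "cnj (frak_a (H N) z) = cnj (fst (Q G z N)) * cnj (fst (Q F z N)) + z ^ (3 * N) * snd (Q G z N) * cnj (snd (Q F z N))"
        using fH(1)[OF z1 N] by (simp add: pmul_def)
      show ?thesis unfolding pstar_sphere[OF z1] e1 complex_cnj_diff complex_cnj_mult by algebra
    qed
    also have "cmod \<dots> \<le> cmod (fst (Q G z N) * fst (Q F z N) - frak_a G z * frak_a F z)
          + cmod (snd (Q G z N) * cnj (snd (Q F z N)) - frak_b G z * cnj (frak_b F z))"
      by (rule order.trans[OF norm_triangle_ineq]) (simp only: complex_mod_cnj norm_mult wn[OF z] mult_1_left order.refl)
    finally show "cmod (pstar (frak_a (H N)) z - (pstar (frak_a F) z * pstar (frak_a G) z
                     + z ^ (3 * N) * pstar (frak_b F) z * frak_b G z))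
        \<le> cmod (fst (Q G z N) * fst (Q F z N) - frak_a G z * frak_a F z)
          + cmod (snd (Q G z N) * cnj (snd (Q F z N)) - frak_b G z * cnj (frak_b F z))" .
  qed
  have P2: "uniform_limit S
           (\<lambda>N z. frak_b (H N) z
                  - (z ^ (3 * N) * frak_b G z * frak_a F z
                     + frak_b F z * pstar (frak_a G) z))
           (\<lambda>z. 0) sequentially"
  proof (rule ulim_zero_from[OF uniform_lim_mult[OF cG(2) cF(1) bdd(4) bdd(1)]
          uniform_lim_mult[OF cF(2) cnjG bdd(2) bdd(7)]])
    fix N z assume N: "N \<ge> (1::nat)" and z: "z \<in> S"
    have z1: "cmod z = 1" using z zS by simp
    have "frak_b (H N) z - (z ^ (3 * N) * frak_b G z * frak_a F z
                     + frak_b F z * pstar (frak_a G) z)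
        = z ^ (3 * N) * (snd (Q G z N) * fst (Q F z N) - frak_b G z * frak_a F z)
          + (snd (Q F z N) * cnj (fst (Q G z N)) - frak_b F z * cnj (frak_a G z))"
    proof -
      have e1: "frak_b (H N) z = z ^ (3 * N) * snd (Q G z N) * fst (Q F z N) + cnj (fst (Q G z N)) * snd (Q F z N)"
        using fH(2)[OF z1 N] by (simp add: pmul_def)
      show ?thesis unfolding e1 pstar_sphere[OF z1] by algebra
    qed
    also have "cmod \<dots> \<le> cmod (snd (Q G z N) * fst (Q F z N) - frak_b G z * frak_a F z)
          + cmod (snd (Q F z N) * cnj (fst (Q G z N)) - frak_b F z * cnj (frak_a G z))"
      by (rule order.trans[OF norm_triangle_ineq]) (simp add: norm_mult wn[OF z])
    finally show "cmod (frak_b (H N) z - (z ^ (3 * N) * frak_b G z * frak_a F z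
                     + frak_b F z * pstar (frak_a G) z))
        \<le> cmod (snd (Q G z N) * fst (Q F z N) - frak_b G z * frak_a F z)
          + cmod (snd (Q F z N) * cnj (fst (Q G z N)) - frak_b F z * cnj (frak_a G z))" .
  qed
  have P3: "limsup (\<lambda>N. ereal (cmod (frak_r (H N) z - frak_r (trunc (int N) F) z)))
           \<le> ereal (cmod (frak_r G z) / (1 - cmod (frak_r G z)))" if z: "z \<in> S" for z
  proof -
    have z1: "cmod z = 1" using z zS by simp
    define a where "a N = fst (Q G z N)" for N
    define b where "b N = snd (Q G z N)" for N
    define r where "r N = b N / cnj (a N)" for N
    define f where "f N = cmod (r N) / (1 - cmod (r N))" for N
    have da: "a \<longlonglongrightarrow> frak_a G z" unfolding a_def using tendsto_uniform_limitI[OF cG(1) z] .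
    have db: "b \<longlonglongrightarrow> frak_b G z" unfolding b_def using tendsto_uniform_limitI[OF cG(2) z] .
    have det: "(cmod (a N))\<^sup>2 - (cmod (b N))\<^sup>2 = 1" for N
      using pdet_tp[OF z1 cG(4), where lo="- int N" and k="2 * N + 1"] unfolding a_def b_def Q_def pdet_def by simp
    have "(\<lambda>N. (cmod (a N))\<^sup>2 - (cmod (b N))\<^sup>2) \<longlonglongrightarrow> (cmod (frak_a G z))\<^sup>2 - (cmod (frak_b G z))\<^sup>2"
      by (intro tendsto_intros da db)
    then have detl: "(cmod (frak_a G z))\<^sup>2 - (cmod (frak_b G z))\<^sup>2 = 1"
      using det by (simp add: LIMSEQ_const_iff)
    have aG0: "cnj (frak_a G z) \<noteq> 0"
    proof
      assume "cnj (frak_a G z) = 0"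
      then have "frak_a G z = 0" by simp
      with detl have "(cmod (frak_b G z))\<^sup>2 = -1" by simp
      then show False using zero_le_power2[of "cmod (frak_b G z)"] by linarith
    qed
    have rG: "frak_r G z = frak_b G z / cnj (frak_a G z)"
      by (simp add: frak_r_def pstar_sphere[OF z1])
    have "r \<longlonglongrightarrow> frak_r G z" unfolding r_def[abs_def] rG
      by (intro tendsto_intros da db aG0)
    then have nr: "(\<lambda>N. cmod (r N)) \<longlonglongrightarrow> cmod (frak_r G z)" by (rule tendsto_norm)
    have "cmod (frak_r G z) < 1"
    proof -
      have "(cmod (frak_b G z))\<^sup>2 < (cmod (frak_a G z))\<^sup>2" using detl by simp
      then have "cmod (frak_b G z) < cmod (frak_a G z)"
        by (simp add: power_less_imp_less_base)
      then show ?thesis using aG0 by (simp add: rG norm_divide)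
    qed
    then have "1 - cmod (frak_r G z) \<noteq> 0" by simp
    then have fl: "f \<longlonglongrightarrow> cmod (frak_r G z) / (1 - cmod (frak_r G z))"
      unfolding f_def[abs_def] by (intro tendsto_intros nr)
    have ev: "eventually (\<lambda>N. ereal (cmod (frak_r (H N) z - frak_r (trunc (int N) F) z)) \<le> ereal (f N)) sequentially"
      unfolding eventually_sequentially
    proof (intro exI[of _ 1] allI impI)
      fix N :: nat assume N: "N \<ge> 1"
      define \<alpha> where "\<alpha> = a N"
      define \<beta> where "\<beta> = z ^ (3 * N) * b N"
      have dF: "(cmod (fst (Q F z N)))\<^sup>2 - (cmod (snd (Q F z N)))\<^sup>2 = 1"
        using pdet_tp[OF z1 cF(4), where lo="- int N" and k="2 * N + 1"] unfolding Q_def pdet_def by simp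
      have dG: "(cmod \<alpha>)\<^sup>2 - (cmod \<beta>)\<^sup>2 = 1"
        using det[of N] wn[OF z] by (simp add: \<alpha>_def \<beta>_def norm_mult)
      have eq: "frak_r (H N) z - frak_r (trunc (int N) F) z =
        (\<beta> * fst (Q F z N) + cnj \<alpha> * snd (Q F z N)) / cnj (\<alpha> * fst (Q F z N) + cnj \<beta> * snd (Q F z N))
         - snd (Q F z N) / cnj (fst (Q F z N))"
        unfolding frak_r_def pstar_sphere[OF z1] fH(1)[OF z1 N] fH(2)[OF z1 N] frak_trunc[OF z1]
        by (simp only: pmul_def fst_conv snd_conv \<alpha>_def \<beta>_def a_def b_def)
      have "cmod (frak_r (H N) z - frak_r (trunc (int N) F) z) \<le> (cmod \<beta> / cmod \<alpha>) / (1 - cmod \<beta> / cmod \<alpha>)"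
        unfolding eq by (rule core[OF dF dG])
      also have "\<dots> = f N"
        by (simp add: f_def r_def \<alpha>_def \<beta>_def norm_mult norm_divide wn[OF z])
      finally show "ereal (cmod (frak_r (H N) z - frak_r (trunc (int N) F) z)) \<le> ereal (f N)" by simp
    qed
    have "limsup (\<lambda>N. ereal (cmod (frak_r (H N) z - frak_r (trunc (int N) F) z))) \<le> limsup (\<lambda>N. ereal (f N))"
      by (rule Limsup_mono[OF ev])
    also have "limsup (\<lambda>N. ereal (f N)) = ereal (cmod (frak_r G z) / (1 - cmod (frak_r G z)))"
      by (rule lim_imp_Limsup) (use fl in auto)
    finally show ?thesis .
  qed
  show ?thesis using P1 P2 P3 unfolding S_def H_def by blast
qed

end
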